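(* Fix $\beta\ne0$. For any episode $k\in[K]$, with $\pi^k$ the policy used in episode $k$ and $\mathcal{F}_k$ the history before episode $k$, $$\frac1\beta\big[e^{\beta V_1^*(s_1)}-e^{\beta V_1^{\pi^k}(s_1)}\big]=\mathbb{E}\Big[\sum_{h=1}^H\overline{\Delta}_h\big(s_h,\pi^k_h(s_h);\tau^{\pi^k}_{h-1}\big)\,\Big|\,\mathcal{F}_k\Big],$$ where $\tau^{\pi^k}=((s_h,\pi_h^k(s_h)))_{h\in[H]}$ is the random trajectory generated from $s_1$ by following $\pi^k$ under the transitions $\mathcal{P}$.
   Context: Episodic finite-horizon tabular MDP with finite states $\mathcal{S}$, finite actions $\mathcal{A}$, horizon $H$, $K$ episodes, transitions $\mathcal{P}_h(\cdot\mid s,a)$, deterministic rewards $r_h:\mathcal{S}\times\mathcal{A}\to[0,1]$, fixed initial state $s_1$. A policy is $\pi=(\pi_h:\mathcal{S}\to\mathcal{A})_{h\in[H]}$; the learner's policy $\pi^k$ in episode $k$ is determined by $\mathcal{F}_k$. For $\beta\ne0$: $V_h^\pi(s)=\frac1\beta\log\mathbb{E}[e^{\beta\sum_{i=h}^H r_i(s_i,\pi_i(s_i))}\mid s_h=s]$, $Q_h^\pi(s,a)$ likewise with $a_h=a$ and $\pi$ thereafter; $V^*_h=\sup_\pi V^\pi_h$ attained by an optimal $\pi^*$, $Q^*_h=Q^{\pi^*}_h$. For a trajectory prefix $\tau_{h-1}=((s_j,a_j))_{j<h}$, $R(\tau_{h-1})=\sum_{j<h}r_j(s_j,a_j)$ (zero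 for $h=1$), and the semi-normalized gap is $\overline{\Delta}_h(s,a;\tau_{h-1})=\frac1\beta e^{\beta R(\tau_{h-1})}[e^{\beta V^*_h(s)}-e^{\beta Q^*_h(s,a)}]$. *)

theory Defs
  imports "HOL-Probability.Probability"
begin

text \<open>Steps are indexed 1..H. A (deterministic Markov) policy is
  a map pol :: nat => 's => 'a (pol h s is the action taken at step h in state s).\<close>

type_synonym ('s,'a) policy = "nat \<Rightarrow> 's \<Rightarrow> 'a"

text \<open>Distribution of the list of states [s_h, s_(h+1), ..., s_(h+n-1)] visited when
  starting in state s at step h and following policy pol for n steps.\<close>
fun traj :: "(nat \<Rightarrow> 's \<Rightarrow> 'a \<Rightarrow> 's pmf) \<Rightarrow> ('s,'a) policy \<Rightarrow> nat \<Rightarrow> nat \<Rightarrow> 's \<Rightarrow> 's list pmf" where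
  "traj P pol h 0 s = return_pmf []"
| "traj P pol h (Suc n) s =
     (if n = 0 then return_pmf [s]
      else bind_pmf (P h s (pol h s)) (\<lambda>s'. map_pmf (Cons s) (traj P pol (Suc h) n s')))"

definition ret :: "(nat \<Rightarrow> 's \<Rightarrow> 'a \<Rightarrow> real) \<Rightarrow> ('s,'a) policy \<Rightarrow> nat \<Rightarrow> 's list \<Rightarrow> real" where
  "ret r pol h xs = (\<Sum>i<length xs. r (h + i) (xs ! i) (pol (h + i) (xs ! i)))"

definition Vpi :: "real \<Rightarrow> nat \<Rightarrow> (nat \<Rightarrow> 's \<Rightarrow> 'a \<Rightarrow> 's pmf) \<Rightarrow> (nat \<Rightarrow> 's \<Rightarrow> 'a \<Rightarrow> real)
    \<Rightarrow> ('s,'a) policy \<Rightarrow> nat \<Rightarrow> 's \<Rightarrow> real" where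
  "Vpi \<beta> H P r pol h s =
     (1 / \<beta>) * ln (measure_pmf.expectation (traj P pol h (Suc H - h) s)
                      (\<lambda>xs. exp (\<beta> * ret r pol h xs)))"

definition Qpi :: "real \<Rightarrow> nat \<Rightarrow> (nat \<Rightarrow> 's \<Rightarrow> 'a \<Rightarrow> 's pmf) \<Rightarrow> (nat \<Rightarrow> 's \<Rightarrow> 'a \<Rightarrow> real)
    \<Rightarrow> ('s,'a) policy \<Rightarrow> nat \<Rightarrow> 's \<Rightarrow> 'a \<Rightarrow> real" where
  "Qpi \<beta> H P r pol h s a = Vpi \<beta> H P r (pol(h := (\<lambda>_. a))) h s"

definition Vstar :: "real \<Rightarrow> nat \<Rightarrow> (nat \<Rightarrow> 's \<Rightarrow> 'a \<Rightarrow> 's pmf) \<Rightarrow> (nat \<Rightarrow> 's \<Rightarrow> 'a \<Rightarrow> real)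
    \<Rightarrow> nat \<Rightarrow> 's \<Rightarrow> real" where
  "Vstar \<beta> H P r h s = (SUP pol. Vpi \<beta> H P r pol h s)"

definition optimal_policy :: "real \<Rightarrow> nat \<Rightarrow> (nat \<Rightarrow> 's \<Rightarrow> 'a \<Rightarrow> 's pmf) \<Rightarrow> (nat \<Rightarrow> 's \<Rightarrow> 'a \<Rightarrow> real)
    \<Rightarrow> ('s,'a) policy \<Rightarrow> bool" where
  "optimal_policy \<beta> H P r pis \<longleftrightarrow>
     (\<forall>h\<in>{1..H}. \<forall>s. Vpi \<beta> H P r pis h s = Vstar \<beta> H P r h s)"

definition Rprefix :: "(nat \<Rightarrow> 's \<Rightarrow> 'a \<Rightarrow> real) \<Rightarrow> ('s \<times> 'a) list \<Rightarrow> real" where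
  "Rprefix r tau = (\<Sum>j<length tau. r (Suc j) (fst (tau ! j)) (snd (tau ! j)))"

text \<open>Semi-normalized gap, with Q* = Q^(pis) for an optimal policy pis.\<close>
definition gap :: "real \<Rightarrow> nat \<Rightarrow> (nat \<Rightarrow> 's \<Rightarrow> 'a \<Rightarrow> 's pmf) \<Rightarrow> (nat \<Rightarrow> 's \<Rightarrow> 'a \<Rightarrow> real)
    \<Rightarrow> ('s,'a) policy \<Rightarrow> nat \<Rightarrow> 's \<Rightarrow> 'a \<Rightarrow> ('s \<times> 'a) list \<Rightarrow> real" where
  "gap \<beta> H P r pis h s a tau =
     (1 / \<beta>) * exp (\<beta> * Rprefix r tau) *
       (exp (\<beta> * Vstar \<beta> H P r h s) - exp (\<beta> * Qpi \<beta> H P r pis h s a))"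

definition traj_prefix :: "('s,'a) policy \<Rightarrow> 's list \<Rightarrow> nat \<Rightarrow> ('s \<times> 'a) list" where
  "traj_prefix pol xs m = map (\<lambda>j. (xs ! j, pol (Suc j) (xs ! j))) [0..<m]"

end

theory Submission
  imports Defs
begin

lemma finite_traj: "finite (set_pmf (traj P pol h n (s::'s::finite)))"
proof (induction n arbitrary: h s)
  case 0 then show ?case by simp
next
  case (Suc n) then show ?case by (auto simp: set_bind_pmf)
qed

lemma len_traj: "xs \<in> set_pmf (traj P pol h n s) \<Longrightarrow> length xs = n"
proof (induction n arbitrary: h s xs)
  case 0 then show ?case by simp
next
  case (Suc n) then show ?case by (auto split: if_splits)
qed

lemma exp_bind:
  fixes p :: "'s::finite pmf" and h :: "'b \<Rightarrow> real"
  assumes "\<And>x. finite (set_pmf (f x))"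
  shows "measure_pmf.expectation (p \<bind> f) h = measure_pmf.expectation p (\<lambda>a. measure_pmf.expectation (f a) h)"
proof -
  have "measure_pmf.expectation (p \<bind> f) h = (\<Sum>a\<in>UNIV. pmf p a *\<^sub>R measure_pmf.expectation (f a) h)"
    by (rule pmf_expectation_bind) (use assms in auto)
  also have "\<dots> = measure_pmf.expectation p (\<lambda>a. measure_pmf.expectation (f a) h)"
    by (subst integral_measure_pmf[of UNIV]) auto
  finally show ?thesis .
qed

lemma ret_Cons: "ret r pol h (x # xs) = r h x (pol h x) + ret r pol (Suc h) xs"
  unfolding ret_def length_Cons sum.lessThan_Suc_shift by simp

lemma ret_Nil: "ret r pol h [] = 0"
  unfolding ret_def by simp

definition W where
  "W \<beta> P r pol h n s = measure_pmf.expectation (traj P pol h n s) (\<lambda>xs. exp (\<beta> * ret r pol h xs))"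

lemma W_0: "W \<beta> P r pol h 0 s = 1"
  unfolding W_def by (simp add: ret_Nil)

lemma W_Suc:
  fixes P :: "nat \<Rightarrow> 's::finite \<Rightarrow> 'a \<Rightarrow> 's pmf"
  shows "W \<beta> P r pol h (Suc m) s = exp (\<beta> * r h s (pol h s)) *
     measure_pmf.expectation (P h s (pol h s)) (\<lambda>s'. W \<beta> P r pol (Suc h) m s')"
proof (cases "m = 0")
  case True then show ?thesis by (simp add: W_def ret_Cons ret_Nil)
next
  case False
  have "W \<beta> P r pol h (Suc m) s = measure_pmf.expectation (P h s (pol h s))
      (\<lambda>s'. measure_pmf.expectation (traj P pol (Suc h) m s') (\<lambda>ys. exp (\<beta> * ret r pol h (s # ys))))"
    using False unfolding W_def by (simp add: exp_bind finite_traj map_pmf_def[symmetric])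
  also have "\<dots> = measure_pmf.expectation (P h s (pol h s))
      (\<lambda>s'. exp (\<beta> * r h s (pol h s)) * W \<beta> P r pol (Suc h) m s')"
    unfolding W_def by (simp add: ret_Cons distrib_left exp_add)
  finally show ?thesis by simp
qed

lemma W_pos:
  fixes P :: "nat \<Rightarrow> 's::finite \<Rightarrow> 'a \<Rightarrow> 's pmf"
  shows "W \<beta> P r pol h n s > 0"
proof -
  let ?f = "\<lambda>xs. exp (\<beta> * ret r pol h xs)"
  have int: "integrable (measure_pmf (traj P pol h n s)) ?f"
    by (rule integrable_measure_pmf_finite[OF finite_traj])
  have ge: "W \<beta> P r pol h n s \<ge> 0" unfolding W_def by (rule integral_nonneg_AE) auto
  moreover have "W \<beta> P r pol h n s \<noteq> 0"
  proof
    assume "W \<beta> P r pol h n s = 0"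
    then have "AE x in measure_pmf (traj P pol h n s). ?f x = 0"
      unfolding W_def by (subst (asm) integral_nonneg_eq_0_iff_AE[OF int]) auto
    then have "\<forall>x\<in>set_pmf (traj P pol h n s). ?f x = 0" by (simp add: AE_measure_pmf_iff)
    moreover obtain x where "x \<in> set_pmf (traj P pol h n s)" using set_pmf_not_empty by fast
    ultimately show False by auto
  qed
  ultimately show ?thesis by linarith
qed

lemma W_indep:
  fixes P :: "nat \<Rightarrow> 's::finite \<Rightarrow> 'a \<Rightarrow> 's pmf"
  shows "(\<forall>j\<ge>h. pol j = pol' j) \<Longrightarrow> W \<beta> P r pol h n s = W \<beta> P r pol' h n s"
proof (induction n arbitrary: h s)
  case 0 then show ?case by (simp add: W_0)
next
  case (Suc n)
  have "\<forall>j\<ge>Suc h. pol j = pol' j" using Suc.prems by auto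
  then have "\<And>s. W \<beta> P r pol (Suc h) n s = W \<beta> P r pol' (Suc h) n s" using Suc.IH by blast
  moreover have "pol h = pol' h" using Suc.prems by auto
  ultimately show ?case by (simp add: W_Suc)
qed

definition F where
  "F \<beta> P r pis pik h n xs = (\<Sum>i<n. exp (\<beta> * ret r pik h (take i xs)) *
     (W \<beta> P r pis (h+i) (n-i) (xs!i) - exp (\<beta> * r (h+i) (xs!i) (pik (h+i) (xs!i))) *
        measure_pmf.expectation (P (h+i) (xs!i) (pik (h+i) (xs!i))) (\<lambda>s'. W \<beta> P r pis (Suc (h+i)) (n - Suc i) s')))"

lemma main:
  fixes P :: "nat \<Rightarrow> 's::finite \<Rightarrow> 'a \<Rightarrow> 's pmf"
  shows "measure_pmf.expectation (traj P pik h n s) (F \<beta> P r pis pik h n) =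
    W \<beta> P r pis h n s - W \<beta> P r pik h n s"
proof (induction n arbitrary: h s)
  case 0 then show ?case by (simp add: F_def W_0)
next
  case (Suc m)
  define a where "a = pik h s"
  define c where "c = exp (\<beta> * r h s a)"
  define T0 where "T0 = W \<beta> P r pis h (Suc m) s - c *
        measure_pmf.expectation (P h s a) (\<lambda>s'. W \<beta> P r pis (Suc h) m s')"
  have Wk: "W \<beta> P r pik h (Suc m) s = c * measure_pmf.expectation (P h s a) (\<lambda>s'. W \<beta> P r pik (Suc h) m s')"
    by (simp add: W_Suc a_def c_def)
  show ?case
  proof (cases "m = 0")
    case True
    then show ?thesis using Wk by (simp add: F_def W_0 ret_Nil c_def a_def)
  next
    case False
    have Fc: "F \<beta> P r pis pik h (Suc m) (s # ys) = T0 + c * F \<beta> P r pis pik (Suc h) m ys" for ys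
      unfolding F_def sum.lessThan_Suc_shift
      by (simp add: T0_def c_def a_def ret_Nil ret_Cons exp_add sum_distrib_left algebra_simps)
    have "measure_pmf.expectation (traj P pik h (Suc m) s) (F \<beta> P r pis pik h (Suc m)) =
      measure_pmf.expectation (P h s a) (\<lambda>s'. measure_pmf.expectation (traj P pik (Suc h) m s')
         (\<lambda>ys. T0 + c * F \<beta> P r pis pik (Suc h) m ys))"
      using False by (simp add: exp_bind finite_traj map_pmf_def[symmetric] a_def Fc)
    also have "\<dots> = measure_pmf.expectation (P h s a) (\<lambda>s'. T0 + c * (W \<beta> P r pis (Suc h) m s' - W \<beta> P r pik (Suc h) m s'))"
      by (subst Bochner_Integration.integral_add) (auto simp: integrable_measure_pmf_finite finite_traj Suc.IH)
    also have "\<dots> = T0 + c * (measure_pmf.expectation (P h s a) (\<lambda>s'. W \<beta> P r pis (Suc h) m s')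
         - measure_pmf.expectation (P h s a) (\<lambda>s'. W \<beta> P r pik (Suc h) m s'))"
      by (subst Bochner_Integration.integral_add) (auto simp: integrable_measure_pmf_finite Bochner_Integration.integral_diff)
    also have "\<dots> = W \<beta> P r pis h (Suc m) s - W \<beta> P r pik h (Suc m) s"
      by (simp add: T0_def Wk algebra_simps)
    finally show ?thesis .
  qed
qed

lemma expV:
  fixes P :: "nat \<Rightarrow> 's::finite \<Rightarrow> 'a \<Rightarrow> 's pmf"
  assumes "\<beta> \<noteq> 0"
  shows "exp (\<beta> * Vpi \<beta> H P r pol h s) = W \<beta> P r pol h (Suc H - h) s"
proof -
  have "exp (\<beta> * Vpi \<beta> H P r pol h s) = exp (ln (W \<beta> P r pol h (Suc H - h) s))"
    using assms unfolding Vpi_def W_def by simp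
  also have "\<dots> = W \<beta> P r pol h (Suc H - h) s" using W_pos by simp
  finally show ?thesis .
qed

lemma expQ:
  fixes P :: "nat \<Rightarrow> 's::finite \<Rightarrow> 'a \<Rightarrow> 's pmf"
  assumes "\<beta> \<noteq> 0" "h \<le> H"
  shows "exp (\<beta> * Qpi \<beta> H P r pol h s a) = exp (\<beta> * r h s a) *
     measure_pmf.expectation (P h s a) (\<lambda>s'. W \<beta> P r pol (Suc h) (H - h) s')"
proof -
  have e: "Suc H - h = Suc (H - h)" using assms by simp
  have "exp (\<beta> * Qpi \<beta> H P r pol h s a) = W \<beta> P r (pol(h := (\<lambda>_. a))) h (Suc (H - h)) s"
    unfolding Qpi_def using expV[OF assms(1)] e by metis
  also have "\<dots> = exp (\<beta> * r h s a) *
     measure_pmf.expectation (P h s a) (\<lambda>s'. W \<beta> P r (pol(h := (\<lambda>_. a))) (Suc h) (H - h) s')"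
    by (simp add: W_Suc)
  also have "(\<lambda>s'. W \<beta> P r (pol(h := (\<lambda>_. a))) (Suc h) (H - h) s') = (\<lambda>s'. W \<beta> P r pol (Suc h) (H - h) s')"
    by (intro ext W_indep) auto
  finally show ?thesis .
qed

lemma Rprefix_ret:
  assumes "i \<le> length xs"
  shows "Rprefix r (traj_prefix pol xs i) = ret r pol 1 (take i xs)"
  unfolding Rprefix_def traj_prefix_def ret_def using assms
  by (intro sum.cong) auto

theorem lemma4:
  fixes \<beta> :: real and H :: nat
    and P :: "nat \<Rightarrow> 's::finite \<Rightarrow> 'a::finite \<Rightarrow> 's pmf"
    and r :: "nat \<Rightarrow> 's \<Rightarrow> 'a \<Rightarrow> real"
    and s1 :: 's and pis pik :: "('s,'a) policy"
  assumes "\<beta> \<noteq> 0"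
    and "\<And>h s a. 0 \<le> r h s a \<and> r h s a \<le> 1"
    and "optimal_policy \<beta> H P r pis"
  shows "(1 / \<beta>) * (exp (\<beta> * Vstar \<beta> H P r 1 s1) - exp (\<beta> * Vpi \<beta> H P r pik 1 s1)) =
         measure_pmf.expectation (traj P pik 1 H s1)
           (\<lambda>xs. \<Sum>h=1..H. gap \<beta> H P r pis h (xs ! (h - 1)) (pik h (xs ! (h - 1)))
                              (traj_prefix pik xs (h - 1)))"
proof (cases "H = 0")
  case True
  have "\<And>pol. Vpi \<beta> H P r pol 1 s1 = 0" using True by (simp add: Vpi_def ret_Nil)
  then have "Vstar \<beta> H P r 1 s1 = 0" unfolding Vstar_def by simp
  then show ?thesis using True \<open>\<And>pol. Vpi \<beta> H P r pol 1 s1 = 0\<close> by simp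
next
  case False
  have opt: "\<And>h s. h \<in> {1..H} \<Longrightarrow> Vstar \<beta> H P r h s = Vpi \<beta> H P r pis h s"
    using assms(3) unfolding optimal_policy_def by auto
  have L: "(1 / \<beta>) * (exp (\<beta> * Vstar \<beta> H P r 1 s1) - exp (\<beta> * Vpi \<beta> H P r pik 1 s1)) =
     (1 / \<beta>) * (W \<beta> P r pis 1 H s1 - W \<beta> P r pik 1 H s1)"
    using False by (simp add: opt expV[OF assms(1)])
  also have "\<dots> = measure_pmf.expectation (traj P pik 1 H s1) (\<lambda>xs. (1 / \<beta>) * F \<beta> P r pis pik 1 H xs)"
    by (simp add: main)
  also have "\<dots> = measure_pmf.expectation (traj P pik 1 H s1)
           (\<lambda>xs. \<Sum>h=1..H. gap \<beta> H P r pis h (xs ! (h - 1)) (pik h (xs ! (h - 1)))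
                              (traj_prefix pik xs (h - 1)))"
  proof (rule integral_cong_AE)
    show "AE xs in measure_pmf (traj P pik 1 H s1). (1 / \<beta>) * F \<beta> P r pis pik 1 H xs =
      (\<Sum>h=1..H. gap \<beta> H P r pis h (xs ! (h - 1)) (pik h (xs ! (h - 1))) (traj_prefix pik xs (h - 1)))"
      unfolding AE_measure_pmf_iff
    proof
      fix xs assume "xs \<in> set_pmf (traj P pik 1 H s1)"
      then have len: "length xs = H" by (rule len_traj)
      have "(\<Sum>h=1..H. gap \<beta> H P r pis h (xs ! (h - 1)) (pik h (xs ! (h - 1))) (traj_prefix pik xs (h - 1)))
        = (\<Sum>i<H. gap \<beta> H P r pis (Suc i) (xs ! i) (pik (Suc i) (xs ! i)) (traj_prefix pik xs i))"
        by (simp add: sum.atLeast1_atMost_eq)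
      also have "\<dots> = (\<Sum>i<H. (1 / \<beta>) * (exp (\<beta> * ret r pik 1 (take i xs)) *
          (W \<beta> P r pis (1+i) (H-i) (xs!i) - exp (\<beta> * r (1+i) (xs!i) (pik (1+i) (xs!i))) *
            measure_pmf.expectation (P (1+i) (xs!i) (pik (1+i) (xs!i))) (\<lambda>s'. W \<beta> P r pis (Suc (1+i)) (H - Suc i) s'))))"
      proof (rule sum.cong[OF refl])
        fix i assume "i \<in> {..<H}"
        then have i: "i < H" by simp
        have "Suc H - Suc i = H - i" by simp
        then show "gap \<beta> H P r pis (Suc i) (xs ! i) (pik (Suc i) (xs ! i)) (traj_prefix pik xs i) = 
          (1 / \<beta>) * (exp (\<beta> * ret r pik 1 (take i xs)) *
          (W \<beta> P r pis (1+i) (H-i) (xs!i) - exp (\<beta> * r (1+i) (xs!i) (pik (1+i) (xs!i))) *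
            measure_pmf.expectation (P (1+i) (xs!i) (pik (1+i) (xs!i))) (\<lambda>s'. W \<beta> P r pis (Suc (1+i)) (H - Suc i) s')))"
          unfolding gap_def using i len
          by (simp add: opt expV[OF assms(1)] expQ[OF assms(1)] Rprefix_ret Suc_diff_Suc)
      qed
      also have "\<dots> = (1 / \<beta>) * F \<beta> P r pis pik 1 H xs"
        unfolding F_def by (simp add: sum_distrib_left)
      finally show "(1 / \<beta>) * F \<beta> P r pis pik 1 H xs =
      (\<Sum>h=1..H. gap \<beta> H P r pis h (xs ! (h - 1)) (pik h (xs ! (h - 1))) (traj_prefix pik xs (h - 1)))" by simp
    qed
  qed simp_all
  finally show ?thesis .
qed

end
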